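(* Let $\mathcal{P}=\langle P,\le\rangle$ be a finite bounded poset with $|P|\ge 2$ and $m\in\mathbb{N}$. If $(R^+_{All})^m(\mathcal{P})$ is graded, then $(R^+)^m(\mathcal{P})$ is graded.
   Context: A poset is bounded if it has a least element $\bot$ and greatest element $\top$. The height $H$ of a finite poset is the number of elements in its largest chain. $a\lessdot b$ denotes covering. A bounded poset with top $\top$ and height $H$ is graded if there is $\rho$ into $\{0,\dots,H-1\}$ with $\rho(\top)=0$ and $\rho(a)=\rho(b)-1$ whenever $a\lessdot b$. For $a\in P$, $\uparrow a=\{b:b\ge a\}$, $\downarrow a=\{b:b\le a\}$ as subposets; the standard interval rank is $R^+(a)=[H(\uparrow a)-1,\;H(\mathcal{P})-H(\downarrow a)]$. Weak order: $[x_*,x^*]\le_W[y_*,y^*]$ iff $x_*\le y_*$ and $x^*\le y^*$. The interval rank poset $R^+(\mathcal{P})$ is the set $\{R^+(a):a\in P\}$ ordered by $\ge_W$; $(R^+)^m$ denotes its $m$-fold iteration (applying the construction to the resulting poset each time). $R^+_{All}(\mathcal{P})=\langle P,\le_{R_A}\rangle$ on the same underlying set, where $p<_{R_A}q$ iff $R^+(p)>_W R^+(q)$, and $\le_{R_A}$ is the reflexive closure of $<_{R_A}$; $(R^+_{All})^m$ is its $m$-fold iteration. *)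

theory Defs
  imports Main
begin

type_synonym 'a poset = "'a set \<times> ('a \<Rightarrow> 'a \<Rightarrow> bool)"

definition is_poset :: "'a poset \<Rightarrow> bool" where
  "is_poset P \<longleftrightarrow> (case P of (A, le) \<Rightarrow>
     (\<forall>x\<in>A. le x x) \<and>
     (\<forall>x\<in>A. \<forall>y\<in>A. le x y \<and> le y x \<longrightarrow> x = y) \<and>
     (\<forall>x\<in>A. \<forall>y\<in>A. \<forall>z\<in>A. le x y \<and> le y z \<longrightarrow> le x z))"

definition is_bot :: "'a poset \<Rightarrow> 'a \<Rightarrow> bool" where
  "is_bot P b \<longleftrightarrow> b \<in> fst P \<and> (\<forall>x\<in>fst P. snd P b x)"

definition is_top :: "'a poset \<Rightarrow> 'a \<Rightarrow> bool" where
  "is_top P t \<longleftrightarrow> t \<in> fst P \<and> (\<forall>x\<in>fst P. snd P x t)"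

definition bounded_poset :: "'a poset \<Rightarrow> bool" where
  "bounded_poset P \<longleftrightarrow> is_poset P \<and> (\<exists>b. is_bot P b) \<and> (\<exists>t. is_top P t)"

definition is_chain :: "'a poset \<Rightarrow> 'a set \<Rightarrow> bool" where
  "is_chain P C \<longleftrightarrow> C \<subseteq> fst P \<and> (\<forall>x\<in>C. \<forall>y\<in>C. snd P x y \<or> snd P y x)"

definition height :: "'a poset \<Rightarrow> nat" where
  "height P = Max (card ` {C. is_chain P C})"

definition covered_by :: "'a poset \<Rightarrow> 'a \<Rightarrow> 'a \<Rightarrow> bool" where
  "covered_by P a b \<longleftrightarrow> a \<in> fst P \<and> b \<in> fst P \<and> snd P a b \<and> a \<noteq> b \<and>
     \<not> (\<exists>c\<in>fst P. snd P a c \<and> snd P c b \<and> c \<noteq> a \<and> c \<noteq> b)"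

definition graded :: "'a poset \<Rightarrow> bool" where
  "graded P \<longleftrightarrow> bounded_poset P \<and>
     (\<exists>\<rho> :: 'a \<Rightarrow> nat.
        (\<forall>x\<in>fst P. \<rho> x < height P) \<and>
        (\<forall>t. is_top P t \<longrightarrow> \<rho> t = 0) \<and>
        (\<forall>a b. covered_by P a b \<longrightarrow> \<rho> a = \<rho> b + 1))"

definition up_set :: "'a poset \<Rightarrow> 'a \<Rightarrow> 'a poset" where
  "up_set P a = ({b\<in>fst P. snd P a b}, snd P)"

definition down_set :: "'a poset \<Rightarrow> 'a \<Rightarrow> 'a poset" where
  "down_set P a = ({b\<in>fst P. snd P b a}, snd P)"

definition interval_rank :: "'a poset \<Rightarrow> 'a \<Rightarrow> nat \<times> nat" where
  "interval_rank P a = (height (up_set P a) - 1, height P - height (down_set P a))"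

definition weak_le :: "nat \<times> nat \<Rightarrow> nat \<times> nat \<Rightarrow> bool" where
  "weak_le x y \<longleftrightarrow> fst x \<le> fst y \<and> snd x \<le> snd y"

definition Rplus :: "'a poset \<Rightarrow> (nat \<times> nat) poset" where
  "Rplus P = (interval_rank P ` fst P, \<lambda>x y. weak_le y x)"

definition RAll :: "'a poset \<Rightarrow> 'a poset" where
  "RAll P = (fst P, \<lambda>p q. p = q \<or>
       (weak_le (interval_rank P q) (interval_rank P p) \<and> interval_rank P q \<noteq> interval_rank P p))"

text \<open>\<open>Rplus_iter k P\<close> is (R^+)^(k+1)(P) (the type changes after the first application).\<close>
fun Rplus_iter :: "nat \<Rightarrow> 'a poset \<Rightarrow> (nat \<times> nat) poset" where
  "Rplus_iter 0 P = Rplus P"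
| "Rplus_iter (Suc k) P = Rplus (Rplus_iter k P)"

definition RAll_iter :: "nat \<Rightarrow> 'a poset \<Rightarrow> 'a poset" where
  "RAll_iter m P = (RAll ^^ m) P"

end

theory Submission
  imports Defs
begin

definition infl :: "'a poset \<Rightarrow> 'b poset \<Rightarrow> ('a \<Rightarrow> 'b) \<Rightarrow> bool" where
  "infl Q Q' f \<longleftrightarrow> f ` fst Q = fst Q' \<and> (\<forall>p\<in>fst Q. snd Q p p) \<and> (\<forall>y\<in>fst Q'. snd Q' y y) \<and>
     (\<forall>p\<in>fst Q. \<forall>q\<in>fst Q. p \<noteq> q \<longrightarrow> (snd Q p q \<longleftrightarrow> snd Q' (f p) (f q) \<and> f p \<noteq> f q))"

lemma is_poset_iff: "is_poset P \<longleftrightarrow> (\<forall>x\<in>fst P. snd P x x) \<and>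
     (\<forall>x\<in>fst P. \<forall>y\<in>fst P. snd P x y \<and> snd P y x \<longrightarrow> x = y) \<and>
     (\<forall>x\<in>fst P. \<forall>y\<in>fst P. \<forall>z\<in>fst P. snd P x y \<and> snd P y z \<longrightarrow> snd P x z)"
  by (cases P) (simp add: is_poset_def)

lemma infl_height:
  assumes I: "infl Q Q' f"
  shows "height Q = height Q'"
proof -
  have img: "f ` fst Q = fst Q'" and rQ: "\<And>p. p\<in>fst Q \<Longrightarrow> snd Q p p"
    and rQ': "\<And>y. y\<in>fst Q' \<Longrightarrow> snd Q' y y"
    and ord: "\<And>p q. p\<in>fst Q \<Longrightarrow> q\<in>fst Q \<Longrightarrow> p \<noteq> q \<Longrightarrow> (snd Q p q \<longleftrightarrow> snd Q' (f p) (f q) \<and> f p \<noteq> f q)"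
    using I unfolding infl_def by auto
  have "card ` {C. is_chain Q C} = card ` {D. is_chain Q' D}"
  proof
    show "card ` {C. is_chain Q C} \<subseteq> card ` {D. is_chain Q' D}"
    proof
      fix n assume "n \<in> card ` {C. is_chain Q C}"
      then obtain C where C: "is_chain Q C" "n = card C" by auto
      have sub: "C \<subseteq> fst Q" and cmp: "\<And>x y. x\<in>C \<Longrightarrow> y\<in>C \<Longrightarrow> snd Q x y \<or> snd Q y x"
        using C unfolding is_chain_def by auto
      have inj: "inj_on f C"
      proof (rule inj_onI)
        fix x y assume xy: "x \<in> C" "y \<in> C" "f x = f y"
        show "x = y"
        proof (rule ccontr)
          assume "x \<noteq> y"
          with cmp[OF xy(1,2)] ord[of x y] ord[of y x] sub xy show False by auto
        qed
      qed
      have "is_chain Q' (f ` C)"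
        unfolding is_chain_def
      proof (intro conjI ballI)
        show "f ` C \<subseteq> fst Q'" using sub img by auto
      next
        fix a b assume "a \<in> f ` C" "b \<in> f ` C"
        then obtain x y where xy: "x\<in>C" "y\<in>C" "a = f x" "b = f y" by auto
        show "snd Q' a b \<or> snd Q' b a"
        proof (cases "x = y")
          case True then show ?thesis using xy rQ' sub img by auto
        next
          case False
          with cmp[OF xy(1,2)] ord[of x y] ord[of y x] sub xy show ?thesis by auto
        qed
      qed
      moreover have "card (f ` C) = n" using card_image[OF inj] C by simp
      ultimately show "n \<in> card ` {D. is_chain Q' D}" by force
    qed
  next
    show "card ` {D. is_chain Q' D} \<subseteq> card ` {C. is_chain Q C}"
    proof
      fix n assume "n \<in> card ` {D. is_chain Q' D}"
      then obtain D where D: "is_chain Q' D" "n = card D" by auto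
      have sub: "D \<subseteq> fst Q'" and cmp: "\<And>x y. x\<in>D \<Longrightarrow> y\<in>D \<Longrightarrow> snd Q' x y \<or> snd Q' y x"
        using D unfolding is_chain_def by auto
      define g where "g = inv_into (fst Q) f"
      have gin: "\<And>y. y \<in> D \<Longrightarrow> g y \<in> fst Q \<and> f (g y) = y"
        using sub img unfolding g_def by (metis image_eqI f_inv_into_f inv_into_into subsetD)
      have inj: "inj_on g D"
        by (rule inj_onI) (metis gin)
      have "is_chain Q (g ` D)"
        unfolding is_chain_def
      proof (intro conjI ballI)
        show "g ` D \<subseteq> fst Q" using gin by auto
      next
        fix a b assume "a \<in> g ` D" "b \<in> g ` D"
        then obtain x y where xy: "x\<in>D" "y\<in>D" "a = g x" "b = g y" by auto
        show "snd Q a b \<or> snd Q b a"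
        proof (cases "x = y")
          case True then show ?thesis using xy rQ gin by auto
        next
          case False
          then have "g x \<noteq> g y" using gin xy by metis
          with cmp[OF xy(1,2)] ord[of "g x" "g y"] ord[of "g y" "g x"] gin xy False
          show ?thesis by auto
        qed
      qed
      moreover have "card (g ` D) = n" using card_image[OF inj] D by simp
      ultimately show "n \<in> card ` {C. is_chain Q C}" by force
    qed
  qed
  then show ?thesis unfolding height_def by simp
qed

lemma infl_up:
  assumes I: "infl Q Q' f" and p: "p \<in> fst Q"
  shows "infl (up_set Q p) (up_set Q' (f p)) f"
proof -
  have img: "f ` fst Q = fst Q'" and rQ: "\<And>p. p\<in>fst Q \<Longrightarrow> snd Q p p"
    and rQ': "\<And>y. y\<in>fst Q' \<Longrightarrow> snd Q' y y"
    and ord: "\<And>p q. p\<in>fst Q \<Longrightarrow> q\<in>fst Q \<Longrightarrow> p \<noteq> q \<Longrightarrow> (snd Q p q \<longleftrightarrow> snd Q' (f p) (f q) \<and> f p \<noteq> f q)"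
    using I unfolding infl_def by auto
  have "f ` {b\<in>fst Q. snd Q p b} = {y\<in>fst Q'. snd Q' (f p) y}"
  proof
    show "f ` {b\<in>fst Q. snd Q p b} \<subseteq> {y\<in>fst Q'. snd Q' (f p) y}"
    proof
      fix y assume "y \<in> f ` {b\<in>fst Q. snd Q p b}"
      then obtain b where b: "b \<in> fst Q" "snd Q p b" "y = f b" by auto
      show "y \<in> {y\<in>fst Q'. snd Q' (f p) y}"
        using b ord[OF p b(1)] rQ' img p by (cases "p = b") auto
    qed
  next
    show "{y\<in>fst Q'. snd Q' (f p) y} \<subseteq> f ` {b\<in>fst Q. snd Q p b}"
    proof
      fix y assume y: "y \<in> {y\<in>fst Q'. snd Q' (f p) y}"
      show "y \<in> f ` {b\<in>fst Q. snd Q p b}"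
      proof (cases "y = f p")
        case True then show ?thesis using p rQ by auto
      next
        case False
        from y img obtain b where b: "b \<in> fst Q" "y = f b" by auto
        with False have "p \<noteq> b" by auto
        with ord[OF p b(1)] b y False show ?thesis by auto
      qed
    qed
  qed
  then show ?thesis using I p unfolding infl_def up_set_def by auto
qed

lemma infl_down:
  assumes I: "infl Q Q' f" and p: "p \<in> fst Q"
  shows "infl (down_set Q p) (down_set Q' (f p)) f"
proof -
  have img: "f ` fst Q = fst Q'" and rQ: "\<And>p. p\<in>fst Q \<Longrightarrow> snd Q p p"
    and rQ': "\<And>y. y\<in>fst Q' \<Longrightarrow> snd Q' y y"
    and ord: "\<And>p q. p\<in>fst Q \<Longrightarrow> q\<in>fst Q \<Longrightarrow> p \<noteq> q \<Longrightarrow> (snd Q p q \<longleftrightarrow> snd Q' (f p) (f q) \<and> f p \<noteq> f q)"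
    using I unfolding infl_def by auto
  have "f ` {b\<in>fst Q. snd Q b p} = {y\<in>fst Q'. snd Q' y (f p)}"
  proof
    show "f ` {b\<in>fst Q. snd Q b p} \<subseteq> {y\<in>fst Q'. snd Q' y (f p)}"
    proof
      fix y assume "y \<in> f ` {b\<in>fst Q. snd Q b p}"
      then obtain b where b: "b \<in> fst Q" "snd Q b p" "y = f b" by auto
      show "y \<in> {y\<in>fst Q'. snd Q' y (f p)}"
        using b ord[OF b(1) p] rQ' img p by (cases "p = b") auto
    qed
  next
    show "{y\<in>fst Q'. snd Q' y (f p)} \<subseteq> f ` {b\<in>fst Q. snd Q b p}"
    proof
      fix y assume y: "y \<in> {y\<in>fst Q'. snd Q' y (f p)}"
      show "y \<in> f ` {b\<in>fst Q. snd Q b p}"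
      proof (cases "y = f p")
        case True then show ?thesis using p rQ by auto
      next
        case False
        from y img obtain b where b: "b \<in> fst Q" "y = f b" by auto
        with False have "p \<noteq> b" by auto
        with ord[OF b(1) p] b y False show ?thesis by auto
      qed
    qed
  qed
  then show ?thesis using I p unfolding infl_def down_set_def by auto
qed

lemma infl_rank:
  assumes I: "infl Q Q' f" and p: "p \<in> fst Q"
  shows "interval_rank Q p = interval_rank Q' (f p)"
  unfolding interval_rank_def
  using infl_height[OF I] infl_height[OF infl_up[OF I p]] infl_height[OF infl_down[OF I p]]
  by simp

lemma infl_step:
  assumes I: "infl Q Q' f"
  shows "infl (RAll Q) (Rplus Q') (interval_rank Q' \<circ> f)"
proof -
  have img: "f ` fst Q = fst Q'" using I unfolding infl_def by auto
  have R: "\<And>p. p \<in> fst Q \<Longrightarrow> interval_rank Q p = interval_rank Q' (f p)"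
    using infl_rank[OF I] by auto
  have c: "(interval_rank Q' \<circ> f) ` fst Q = interval_rank Q' ` fst Q'"
    using img image_comp[of "interval_rank Q'" f "fst Q"] by simp
  show ?thesis
    unfolding infl_def RAll_def Rplus_def fst_conv snd_conv c
    using R by (auto simp: weak_le_def)
qed

lemma infl_graded:
  assumes I: "infl Q Q' f" and G: "graded Q"
  shows "graded Q'"
proof -
  have img: "f ` fst Q = fst Q'" and rQ: "\<And>p. p\<in>fst Q \<Longrightarrow> snd Q p p"
    and rQ': "\<And>y. y\<in>fst Q' \<Longrightarrow> snd Q' y y"
    and ord: "\<And>p q. p\<in>fst Q \<Longrightarrow> q\<in>fst Q \<Longrightarrow> p \<noteq> q \<Longrightarrow> (snd Q p q \<longleftrightarrow> snd Q' (f p) (f q) \<and> f p \<noteq> f q)"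
    using I unfolding infl_def by auto
  from G obtain \<rho> where bp: "bounded_poset Q" and r1: "\<forall>x\<in>fst Q. \<rho> x < height Q"
    and r2: "\<forall>t. is_top Q t \<longrightarrow> \<rho> t = 0"
    and r3: "\<forall>a b. covered_by Q a b \<longrightarrow> \<rho> a = \<rho> b + 1"
    unfolding graded_def by blast
  have antiQ: "\<And>x y. x\<in>fst Q \<Longrightarrow> y\<in>fst Q \<Longrightarrow> snd Q x y \<Longrightarrow> snd Q y x \<Longrightarrow> x = y"
    and transQ: "\<And>x y z. x\<in>fst Q \<Longrightarrow> y\<in>fst Q \<Longrightarrow> z\<in>fst Q \<Longrightarrow> snd Q x y \<Longrightarrow> snd Q y z \<Longrightarrow> snd Q x z"
    using bp unfolding bounded_poset_def is_poset_iff by blast+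
  define g where "g = inv_into (fst Q) f"
  have gin: "\<And>y. y \<in> fst Q' \<Longrightarrow> g y \<in> fst Q \<and> f (g y) = y"
    using img unfolding g_def by (metis f_inv_into_f inv_into_into)
  have ord': "\<And>x y. x \<in> fst Q' \<Longrightarrow> y \<in> fst Q' \<Longrightarrow> x \<noteq> y \<Longrightarrow> snd Q' x y \<longleftrightarrow> snd Q (g x) (g y)"
  proof -
    fix x y assume xy: "x \<in> fst Q'" "y \<in> fst Q'" "x \<noteq> y"
    then have "g x \<noteq> g y" using gin by metis
    then show "snd Q' x y \<longleftrightarrow> snd Q (g x) (g y)" using ord[of "g x" "g y"] gin xy by auto
  qed
  have poset: "is_poset Q'"
    unfolding is_poset_iff
  proof (intro conjI ballI impI)
    fix x assume "x \<in> fst Q'" then show "snd Q' x x" using rQ' by blast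
  next
    fix x y assume a: "x \<in> fst Q'" "y \<in> fst Q'" "snd Q' x y \<and> snd Q' y x"
    show "x = y"
    proof (rule ccontr)
      assume ne: "x \<noteq> y"
      then have "g x \<noteq> g y" using gin a by metis
      moreover have "snd Q (g x) (g y)" "snd Q (g y) (g x)" using ord' a ne by blast+
      ultimately show False using antiQ gin a by blast
    qed
  next
    fix x y z assume a: "x \<in> fst Q'" "y \<in> fst Q'" "z \<in> fst Q'" "snd Q' x y \<and> snd Q' y z"
    show "snd Q' x z"
    proof (cases "x = z")
      case True then show ?thesis using rQ' a by blast
    next
      case False
      show ?thesis
      proof (cases "x = y \<or> y = z")
        case True then show ?thesis using a by blast
      next
        case False2: False
        have "snd Q (g x) (g y)" "snd Q (g y) (g z)" using ord' a False2 by blast+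
        then have "snd Q (g x) (g z)" using transQ gin a by blast
        then show ?thesis using ord' a False by blast
      qed
    qed
  qed
  from bp obtain b t where b: "is_bot Q b" and t: "is_top Q t" unfolding bounded_poset_def by blast
  have b': "is_bot Q' (f b)" unfolding is_bot_def
  proof (intro conjI ballI)
    show "f b \<in> fst Q'" using b img unfolding is_bot_def by auto
  next
    fix y assume y: "y \<in> fst Q'"
    then obtain q where q: "q \<in> fst Q" "y = f q" using img by auto
    show "snd Q' (f b) y"
      using b q ord[of b q] rQ' y unfolding is_bot_def by (cases "b = q") auto
  qed
  have t': "is_top Q' (f t)" unfolding is_top_def
  proof (intro conjI ballI)
    show "f t \<in> fst Q'" using t img unfolding is_top_def by auto
  next
    fix y assume y: "y \<in> fst Q'"
    then obtain q where q: "q \<in> fst Q" "y = f q" using img by auto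
    show "snd Q' y (f t)"
      using t q ord[of q t] rQ' y unfolding is_top_def by (cases "t = q") auto
  qed
  show ?thesis
    unfolding graded_def
  proof (intro conjI)
    show "bounded_poset Q'" unfolding bounded_poset_def using poset b' t' by blast
    show "\<exists>\<rho>'::'b \<Rightarrow> nat. (\<forall>x\<in>fst Q'. \<rho>' x < height Q') \<and> (\<forall>t. is_top Q' t \<longrightarrow> \<rho>' t = 0) \<and>
        (\<forall>a b. covered_by Q' a b \<longrightarrow> \<rho>' a = \<rho>' b + 1)"
    proof (intro exI[of _ "\<rho> \<circ> g"] conjI allI impI ballI)
      fix x assume "x \<in> fst Q'"
      then have "g x \<in> fst Q" using gin by blast
      then have "\<rho> (g x) < height Q" using r1 by blast
      then show "(\<rho> \<circ> g) x < height Q'" using infl_height[OF I] by simp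
    next
      fix s assume s: "is_top Q' s"
      then have "s = f t" using t' poset unfolding is_top_def is_poset_iff by blast
      have "g s = t"
      proof (rule ccontr)
        assume ne: "g s \<noteq> t"
        have sQ: "s \<in> fst Q'" using s unfolding is_top_def by blast
        have gs: "g s \<in> fst Q" "f (g s) = f t" using gin[OF sQ] \<open>s = f t\<close> by auto
        have tQ: "t \<in> fst Q" using t unfolding is_top_def by blast
        have "snd Q (g s) t" using t gs(1) unfolding is_top_def by blast
        then have "f (g s) \<noteq> f t" using ord[OF gs(1) tQ ne] by blast
        then show False using gs(2) by blast
      qed
      then show "(\<rho> \<circ> g) s = 0" using r2 t by simp
    next
      fix x y assume c: "covered_by Q' x y"
      have xy: "x \<in> fst Q'" "y \<in> fst Q'" "snd Q' x y" "x \<noteq> y"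
        and nc: "\<not> (\<exists>c\<in>fst Q'. snd Q' x c \<and> snd Q' c y \<and> c \<noteq> x \<and> c \<noteq> y)"
        using c unfolding covered_by_def by blast+
      have gx: "g x \<in> fst Q" "f (g x) = x" and gy: "g y \<in> fst Q" "f (g y) = y" using gin xy by blast+
      have "covered_by Q (g x) (g y)"
        unfolding covered_by_def
      proof (intro conjI)
        show "g x \<in> fst Q" "g y \<in> fst Q" by (fact gx(1), fact gy(1))
        show "g x \<noteq> g y" using gx gy xy by metis
        show "snd Q (g x) (g y)" using ord' xy by blast
        show "\<not> (\<exists>c\<in>fst Q. snd Q (g x) c \<and> snd Q c (g y) \<and> c \<noteq> g x \<and> c \<noteq> g y)"
        proof
          assume "\<exists>c\<in>fst Q. snd Q (g x) c \<and> snd Q c (g y) \<and> c \<noteq> g x \<and> c \<noteq> g y"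
          then obtain c where cc: "c \<in> fst Q" "snd Q (g x) c" "snd Q c (g y)" "c \<noteq> g x" "c \<noteq> g y" by blast
          have 1: "snd Q' x (f c)" "x \<noteq> f c" using ord[OF gx(1) cc(1)] cc gx by auto
          have 2: "snd Q' (f c) y" "f c \<noteq> y" using ord[OF cc(1) gy(1)] cc gy by auto
          have "f c \<in> fst Q'" using cc img by blast
          with 1 2 nc show False by blast
        qed
      qed
      then show "(\<rho> \<circ> g) x = (\<rho> \<circ> g) y + 1" using r3 by simp
    qed
  qed
qed


lemma RAll_iter_Suc: "RAll_iter (Suc k) P = RAll (RAll_iter k P)"
  unfolding RAll_iter_def by simp

lemma infl_iter_ex:
  assumes bp: "bounded_poset P"
  shows "\<exists>f. infl (RAll_iter (Suc k) P) (Rplus_iter k P) f"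
proof (induction k)
  case 0
  have ip: "is_poset P" using bp unfolding bounded_poset_def by blast
  have rP: "\<forall>x\<in>fst P. snd P x x" using ip unfolding is_poset_iff by blast
  have "infl P P id"
    unfolding infl_def using rP by auto
  from infl_step[OF this] have "infl (RAll P) (Rplus P) (interval_rank P \<circ> id)" .
  moreover have "RAll_iter (Suc 0) P = RAll P" unfolding RAll_iter_def by simp
  ultimately show ?case by (metis Rplus_iter.simps(1))
next
  case (Suc k)
  then obtain f where "infl (RAll_iter (Suc k) P) (Rplus_iter k P) f" by blast
  from infl_step[OF this] show ?case by (metis RAll_iter_Suc Rplus_iter.simps(2))
qed

theorem lemma2:
  fixes P :: "'a poset" and m :: nat
  assumes "finite (fst P)"
    and "bounded_poset P"
    and "card (fst P) \<ge> 2"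
    and "graded (RAll_iter m P)"
  shows "if m = 0 then graded P else graded (Rplus_iter (m - 1) P)"
proof (cases m)
  case 0
  then show ?thesis using assms(4) unfolding RAll_iter_def by simp
next
  case (Suc k)
  from infl_iter_ex[OF assms(2), of k] obtain f
    where "infl (RAll_iter (Suc k) P) (Rplus_iter k P) f" by blast
  from infl_graded[OF this] have "graded (Rplus_iter k P)" using assms(4) Suc by blast
  then show ?thesis using Suc by simp
qed

end
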